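(* For $N\ge2$ let $x_{N,k}=k/N$ and $\lambda_{N,k}=\frac{1}{2(N-1)}$ for $k=1,\dots,N-1$, and $x_{N,N}=2$, $\lambda_{N,N}=\frac12$. Let $V_{N,1},\dots,V_{N,N}$ solve the deterministic system $$\frac{d}{dt}V_{N,k}(t)=\sum_{j\neq k}\frac{2(\lambda_{N,k}+\lambda_{N,j})}{V_{N,k}(t)-V_{N,j}(t)},\qquad V_{N,k}(0)=x_{N,k},$$ and let $\alpha_{N,t}=\sum_{k=1}^N\lambda_{N,k}\delta_{V_{N,k}(t)}$. Then for every $T>0$ the sequence $\{\alpha_{N,\cdot}\}_N$ is not tight in $\mathcal M(T)$.
   Context: $\mathcal M(T)=C([0,T],\mathcal P(\mathbb R))$ with the topology of uniform convergence, where $\mathcal P(\mathbb R)$ is the space of probability measures on $\mathbb R$ with the topology of weak convergence (Lévy–Prokhorov metric). A sequence in $\mathcal M(T)$ is tight if it has a subsequence converging in distribution (for deterministic elements: a convergent subsequence). *)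

theory Defs
  imports "HOL-Probability.Probability"
begin

definition prob_measures_R :: "real measure set" where
  "prob_measures_R = {M. sets M = sets borel \<and> prob_space M}"

definition eps_nbhd :: "real \<Rightarrow> real set \<Rightarrow> real set" where
  "eps_nbhd e A = {y. \<exists>x\<in>A. dist y x < e}"

definition lp_dist :: "real measure \<Rightarrow> real measure \<Rightarrow> real" where
  "lp_dist M N = Inf {e. e > 0 \<and> (\<forall>A\<in>sets borel.
       measure M A \<le> measure N (eps_nbhd e A) + e \<and>
       measure N A \<le> measure M (eps_nbhd e A) + e)}"

text \<open>The space M(T) = C([0,T], P(R)) with the Levy--Prokhorov metric.\<close>
definition path_space :: "real \<Rightarrow> (real \<Rightarrow> real measure) set" where
  "path_space T = {\<alpha>. (\<forall>t\<in>{0..T}. \<alpha> t \<in> prob_measures_R) \<and>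
     (\<forall>t\<in>{0..T}. \<forall>e>0. \<exists>d>0. \<forall>s\<in>{0..T}. \<bar>s - t\<bar> < d \<longrightarrow> lp_dist (\<alpha> s) (\<alpha> t) < e)}"

text \<open>A deterministic sequence in M(T) is tight iff it has a subsequence converging
  uniformly on [0,T] (in the Levy--Prokhorov metric) to an element of M(T).\<close>
definition tight_MT :: "real \<Rightarrow> (nat \<Rightarrow> real \<Rightarrow> real measure) \<Rightarrow> bool" where
  "tight_MT T \<beta> \<longleftrightarrow> (\<exists>r \<alpha>. strict_mono r \<and> \<alpha> \<in> path_space T \<and>
     (\<forall>e>0. \<forall>\<^sub>F n in sequentially. \<forall>t\<in>{0..T}. lp_dist (\<beta> (r n) t) (\<alpha> t) < e))"

definition weighted_dirac :: "nat set \<Rightarrow> (nat \<Rightarrow> real) \<Rightarrow> (nat \<Rightarrow> real) \<Rightarrow> real measure" where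
  "weighted_dirac I w x = measure_of UNIV (sets borel)
     (\<lambda>A. \<Sum>k\<in>I. ennreal (w k) * indicator A (x k))"

definition x0 :: "nat \<Rightarrow> nat \<Rightarrow> real" where
  "x0 N k = (if k = N then 2 else real k / real N)"

definition lam :: "nat \<Rightarrow> nat \<Rightarrow> real" where
  "lam N k = (if k = N then 1/2 else 1 / (2 * (real N - 1)))"

end

theory Submission
  imports Defs
begin

lemma mono_from_deriv:
  fixes f f' :: "real \<Rightarrow> real"
  assumes d: "\<And>t. t \<ge> 0 \<Longrightarrow> (f has_real_derivative f' t) (at t within {0..})"
    and nn: "\<And>t. t \<ge> 0 \<Longrightarrow> f' t \<ge> 0" and T: "T \<ge> 0"
  shows "f 0 \<le> f T"
proof (rule DERIV_nonneg_imp_increasing_open[OF T])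
  fix x :: real assume x: "0 < x" "x < T"
  have "(f has_real_derivative f' x) (at x within {0<..})"
    by (rule DERIV_subset[OF d]) (use x in auto)
  then have "DERIV f x :> f' x" using at_within_open[of x "{0<..}"] x by auto
  then show "\<exists>y. DERIV f x :> y \<and> 0 \<le> y" using nn[of x] x by auto
next
  show "continuous_on {0..T} f"
    unfolding continuous_on_eq_continuous_within
  proof
    fix x assume "x \<in> {0..T}"
    then have "continuous (at x within {0..}) f" using DERIV_continuous[OF d[of x]] by auto
    then show "continuous (at x within {0..T}) f"
      by (rule continuous_within_subset) auto
  qed
qed

lemma cont_from_deriv:
  fixes f f' :: "real \<Rightarrow> real"
  assumes d: "\<And>t. t \<ge> 0 \<Longrightarrow> (f has_real_derivative f' t) (at t within {0..})"
  shows "continuous_on {0..} f"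
  unfolding continuous_on_eq_continuous_within
  using DERIV_continuous[OF d] by auto

lemma amhm:
  fixes d :: "nat \<Rightarrow> real"
  assumes "finite J" "\<And>j. j \<in> J \<Longrightarrow> d j > 0"
  shows "real (card J) ^ 2 \<le> (\<Sum>j\<in>J. d j) * (\<Sum>j\<in>J. 1 / d j)"
proof -
  have "(\<Sum>j\<in>J. d j) * (\<Sum>j\<in>J. 1 / d j) = (\<Sum>k\<in>J. \<Sum>j\<in>J. d j / d k)"
    unfolding sum_distrib_right sum_distrib_left by simp
  moreover have "(\<Sum>j\<in>J. \<Sum>k\<in>J. d j / d k) = (\<Sum>j\<in>J. \<Sum>k\<in>J. d k / d j)"
    by (rule sum.swap)
  moreover have "(\<Sum>j\<in>J. \<Sum>k\<in>J. d j / d k + d k / d j) \<ge> (\<Sum>j\<in>J. \<Sum>k\<in>J. 2)"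
  proof (intro sum_mono)
    fix j k assume "j \<in> J" "k \<in> J"
    then have p: "d j > 0" "d k > 0" using assms by auto
    have "d j / d k + d k / d j - 2 = (d j - d k)^2 / (d j * d k)"
      using p by (simp add: field_simps power2_eq_square)
    moreover have "(d j - d k)^2 / (d j * d k) \<ge> 0" using p by simp
    ultimately show "2 \<le> d j / d k + d k / d j" by linarith
  qed
  ultimately show ?thesis
    by (simp add: sum.distrib power2_eq_square)
qed

lemma antisym_sum:
  fixes v :: "nat \<Rightarrow> real" and c :: "nat \<Rightarrow> nat \<Rightarrow> real"
  assumes "finite I" and sym: "\<And>k j. c k j = c j k"
  shows "(\<Sum>k\<in>I. \<Sum>j\<in>I - {k}. c k j / (v k - v j)) = 0"
proof -
  have h1: "(\<Sum>k\<in>I. \<Sum>j\<in>I - {k}. c k j / (v k - v j)) = (\<Sum>k\<in>I. \<Sum>j\<in>I. c k j / (v k - v j))"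
  proof (rule sum.cong[OF refl])
    fix k assume k: "k \<in> I"
    show "(\<Sum>j\<in>I - {k}. c k j / (v k - v j)) = (\<Sum>j\<in>I. c k j / (v k - v j))"
      using sum.remove[OF assms(1) k, of "\<lambda>j. c k j / (v k - v j)"] by simp
  qed
  have "(\<Sum>k\<in>I. \<Sum>j\<in>I. c k j / (v k - v j)) = (\<Sum>j\<in>I. \<Sum>k\<in>I. c k j / (v k - v j))" by (rule sum.swap)
  also have "\<dots> = - (\<Sum>j\<in>I. \<Sum>k\<in>I. c j k / (v j - v k))"
    by (simp add: sum_negf[symmetric] sym, intro sum.cong refl, metis minus_diff_eq minus_divide_right)
  finally show ?thesis using h1 by linarith
qed

lemma heavy_escape:
  fixes v :: "nat \<Rightarrow> real \<Rightarrow> real" and N :: nat and T :: real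
  assumes N2: "N \<ge> 2"
    and distinct: "\<And>k j t. k \<in> {1..N} \<Longrightarrow> j \<in> {1..N} \<Longrightarrow> j \<noteq> k \<Longrightarrow> t \<ge> 0 \<Longrightarrow> v k t \<noteq> v j t"
    and ode: "\<And>k t. k \<in> {1..N} \<Longrightarrow> t \<ge> 0 \<Longrightarrow>
               (v k has_real_derivative
                  (\<Sum>j\<in>{1..N} - {k}. 2 * (lam N k + lam N j) / (v k t - v j t)))
                 (at t within {0..})"
    and init: "\<And>k. k \<in> {1..N} \<Longrightarrow> v k 0 = x0 N k"
    and T: "T \<ge> 0"
  shows "real N * T \<le> 2 * (v N T)^2 \<and> v N T > 0"
proof -
  define D where "D k t = (\<Sum>j\<in>{1..N} - {k}. 2 * (lam N k + lam N j) / (v k t - v j t))" for k t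
  have dv: "\<And>k t. k \<in> {1..N} \<Longrightarrow> t \<ge> 0 \<Longrightarrow> (v k has_real_derivative D k t) (at t within {0..})"
    using ode unfolding D_def by blast
  have cont: "\<And>k. k \<in> {1..N} \<Longrightarrow> continuous_on {0..} (v k)"
    using cont_from_deriv dv by blast
  have Nin: "N \<in> {1..N}" using N2 by auto
  have setN: "{1..N} = insert N {1..N-1}" using N2 by auto
  have setN': "{1..N} - {N} = {1..N-1}" using N2 by auto
  have Nnot: "N \<notin> {1..N-1}" by auto
  have splitN: "sum f {1..N} = f N + sum f {1..N-1}" for f :: "nat \<Rightarrow> real"
    using setN Nnot by (metis finite_atLeastAtMost sum.insert)
  have cardJ: "card {1..N-1} = N - 1" by simp
  have rN1: "real (N - 1) = real N - 1" using N2 by (simp add: of_nat_diff)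
  have order: "v j t < v N t" if j: "j \<in> {1..N-1}" and t: "t \<ge> 0" for j t
  proof (rule ccontr)
    assume "\<not> v j t < v N t"
    then have le: "v N t - v j t \<le> 0" by simp
    have jN: "j \<in> {1..N}" "j \<noteq> N" using j N2 by auto
    have "continuous_on {0..t} (\<lambda>s. v N s - v j s)"
      by (intro continuous_on_diff continuous_on_subset[OF cont] Nin jN) auto
    moreover have "v N 0 - v j 0 > 0"
    proof -
      have "real j < real N" using j N2 by auto
      then have "real j / real N < 1" using N2 by simp
      then show ?thesis using init[OF Nin] init[OF jN(1)] jN(2) by (simp add: x0_def)
    qed
    ultimately obtain x where "0 \<le> x" "x \<le> t" "v N x - v j x = 0"
      using IVT2'[of "\<lambda>s. v N s - v j s" t 0 0] le t by auto
    then show False using distinct[OF Nin jN(1)] jN(2) by auto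
  qed
  have sumD: "(\<Sum>k\<in>{1..N}. D k t) = 0" for t
    unfolding D_def
    by (rule antisym_sum[of "{1..N}" "\<lambda>k j. 2 * (lam N k + lam N j)"]) (auto simp: add.commute)
  have sumD': "(\<Sum>k\<in>{1..N-1}. D k t) = - D N t" for t
    using sumD[of t] splitN[of "\<lambda>k. D k t"] by linarith
  define w where "w t = (\<Sum>k\<in>{1..N}. v k t)" for t
  have dw: "(w has_real_derivative 0) (at t within {0..})" if "t \<ge> 0" for t
  proof -
    have "(w has_real_derivative (\<Sum>k\<in>{1..N}. D k t)) (at t within {0..})"
      unfolding w_def[abs_def] by (rule DERIV_sum) (use dv that in auto)
    then show ?thesis using sumD by simp
  qed
  have "w 0 \<le> w T" by (rule mono_from_deriv[OF dw _ T]) auto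
  moreover have "- w 0 \<le> - w T"
    by (rule mono_from_deriv[of "\<lambda>t. - w t" "\<lambda>t. 0", OF _ _ T])
       (use dw in \<open>auto intro!: derivative_eq_intros\<close>)
  ultimately have wT: "w T = w 0" by linarith
  have w0: "w 0 \<ge> 0" unfolding w_def
    by (intro sum_nonneg) (simp add: init x0_def)
  define u where "u t = (\<Sum>j\<in>{1..N-1}. v N t - v j t)" for t
  have upos: "u t > 0" if "t \<ge> 0" for t
  proof -
    have "1 \<in> {1..N-1}" using N2 by auto
    then show ?thesis unfolding u_def
      by (intro sum_pos2[of _ 1]) (use order that in \<open>auto simp: less_imp_le\<close>)
  qed
  have du: "(u has_real_derivative (real N * D N t)) (at t within {0..})" if "t \<ge> 0" for t
  proof -
    have "(u has_real_derivative (\<Sum>j\<in>{1..N-1}. D N t - D j t)) (at t within {0..})"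
      unfolding u_def[abs_def]
      by (rule DERIV_sum) (use dv that Nin in \<open>auto intro!: derivative_eq_intros\<close>)
    moreover have "(\<Sum>j\<in>{1..N-1}. D N t - D j t) = real N * D N t"
      unfolding sum_subtractf sum_constant cardJ sumD' rN1 by (simp add: algebra_simps)
    ultimately show ?thesis by simp
  qed
  have DN: "D N t * u t \<ge> (real N - 1)^2" if t: "t \<ge> 0" for t
  proof -
    have dpos: "\<And>j. j \<in> {1..N-1} \<Longrightarrow> v N t - v j t > 0" using order t by auto
    have "D N t = (\<Sum>j\<in>{1..N-1}. 2 * (lam N N + lam N j) / (v N t - v j t))"
      unfolding D_def setN' ..
    also have "\<dots> \<ge> (\<Sum>j\<in>{1..N-1}. 1 / (v N t - v j t))"
    proof (rule sum_mono)
      fix j assume j: "j \<in> {1..N-1}"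
      have "j \<noteq> N" using j by auto
      then have "2 * (lam N N + lam N j) \<ge> 1" using N2 by (simp add: lam_def)
      then show "1 / (v N t - v j t) \<le> 2 * (lam N N + lam N j) / (v N t - v j t)"
        using dpos[OF j] by (simp add: divide_right_mono)
    qed
    finally have "D N t \<ge> (\<Sum>j\<in>{1..N-1}. 1 / (v N t - v j t))" .
    moreover have "real (card {1..N-1}) ^ 2 \<le> u t * (\<Sum>j\<in>{1..N-1}. 1 / (v N t - v j t))"
      unfolding u_def by (rule amhm) (use dpos in auto)
    ultimately have "(real N - 1)^2 \<le> u t * D N t"
    proof -
      assume B0: "D N t \<ge> (\<Sum>j\<in>{1..N-1}. 1 / (v N t - v j t))"
        and A0: "real (card {1..N-1}) ^ 2 \<le> u t * (\<Sum>j\<in>{1..N-1}. 1 / (v N t - v j t))"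
      have A: "(real N - 1)^2 \<le> u t * (\<Sum>j\<in>{1..N-1}. 1 / (v N t - v j t))"
        using A0 unfolding cardJ rN1 .
      have B: "u t * (\<Sum>j\<in>{1..N-1}. 1 / (v N t - v j t)) \<le> u t * D N t"
        using B0 upos[OF t] by (intro mult_left_mono) auto
      show ?thesis using A B by linarith
    qed
    then show ?thesis by (simp add: mult.commute)
  qed
  define g where "g t = (u t)^2 - 2 * real N * (real N - 1)^2 * t" for t
  have dg: "(g has_real_derivative (2 * u t * (real N * D N t) - 2 * real N * (real N - 1)^2)) (at t within {0..})"
    if "t \<ge> 0" for t
    unfolding g_def[abs_def] using du[OF that]
    by (auto intro!: derivative_eq_intros)
  have "g 0 \<le> g T"
  proof (rule mono_from_deriv[OF dg _ T])
    fix t :: real assume t: "t \<ge> 0"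
    have "2 * u t * (real N * D N t) = 2 * real N * (D N t * u t)" by simp
    also have "\<dots> \<ge> 2 * real N * (real N - 1)^2"
      using DN[OF t] by (intro mult_left_mono) auto
    finally show "0 \<le> 2 * u t * (real N * D N t) - 2 * real N * (real N - 1)^2" by simp
  qed
  then have ug: "2 * real N * (real N - 1)^2 * T \<le> (u T)^2"
    unfolding g_def using zero_le_power2[of "u 0"] by linarith
  have uT: "u T \<le> real N * v N T"
  proof -
    have "u T = real (N - 1) * v N T - (\<Sum>j\<in>{1..N-1}. v j T)"
      unfolding u_def by (simp add: sum_subtractf cardJ)
    moreover have "w T = v N T + (\<Sum>j\<in>{1..N-1}. v j T)"
      unfolding w_def by (rule splitN)
    ultimately show ?thesis using wT w0 rN1 by (simp add: algebra_simps)
  qed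
  have uTp: "u T > 0" using upos T by auto
  have vpos: "v N T > 0"
  proof (rule ccontr)
    assume "\<not> v N T > 0"
    then have "real N * v N T \<le> 0" by (intro mult_nonneg_nonpos) auto
    then show False using uT uTp by linarith
  qed
  have "(u T)^2 \<le> (real N * v N T)^2" using uT uTp by (intro power_mono) auto
  with ug have k1: "2 * real N * (real N - 1)^2 * T \<le> real N ^ 2 * (v N T)^2"
    by (simp add: power_mult_distrib)
  have "real N ^ 2 / 2 \<le> 2 * (real N - 1)^2"
  proof -
    have "real N \<ge> 2" using N2 by simp
    then have p: "0 \<le> (3 * real N - 2) * (real N - 2) / 2" by simp
    have "2 * (real N - 1)^2 - real N ^ 2 / 2 = (3 * real N - 2) * (real N - 2) / 2"
      by (simp add: power2_eq_square field_simps)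
    with p have "0 \<le> 2 * (real N - 1)^2 - real N ^ 2 / 2" by simp
    then show ?thesis by simp
  qed
  then have "real N * (real N ^ 2 / 2) * T \<le> real N * (2 * (real N - 1)^2) * T"
    using T by (intro mult_right_mono mult_left_mono) auto
  with k1 have "real N * (real N ^ 2 / 2) * T \<le> real N ^ 2 * (v N T)^2" by simp
  then have "real N ^ 2 * (real N * T / 2) \<le> real N ^ 2 * (v N T)^2"
    by (simp add: algebra_simps)
  then have "real N * T / 2 \<le> (v N T)^2"
    using N2 by (simp add: mult_le_cancel_left)
  then show ?thesis using vpos by simp
qed

lemma wd_emeasure:
  assumes "finite I" "A \<in> sets borel"
  shows "emeasure (weighted_dirac I w x) A = (\<Sum>k\<in>I. ennreal (w k) * indicator A (x k))"
  unfolding weighted_dirac_def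
proof (rule emeasure_measure_of_sigma)
  show "sigma_algebra UNIV (sets (borel :: real measure))"
    using sets.sigma_algebra_axioms[of borel] by simp
  show "positive (sets borel) (\<lambda>A. \<Sum>k\<in>I. ennreal (w k) * indicator A (x k))"
    by (simp add: positive_def)
  show "countably_additive (sets borel) (\<lambda>A. \<Sum>k\<in>I. ennreal (w k) * indicator A (x k))"
    unfolding countably_additive_def
  proof (intro allI impI)
    fix A :: "nat \<Rightarrow> real set" assume "range A \<subseteq> sets borel" "disjoint_family A"
    then show "(\<Sum>i. \<Sum>k\<in>I. ennreal (w k) * indicator (A i) (x k)) =
               (\<Sum>k\<in>I. ennreal (w k) * indicator (\<Union> (range A)) (x k))"
      by (subst suminf_sum) (auto simp: suminf_indicator)
  qed
qed (use assms in auto)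

lemma wd_measure:
  assumes "finite I" "A \<in> sets borel" "\<And>k. k \<in> I \<Longrightarrow> w k \<ge> 0"
  shows "measure (weighted_dirac I w x) A = (\<Sum>k\<in>I. w k * indicator A (x k))"
proof -
  have "(\<Sum>k\<in>I. ennreal (w k) * indicator A (x k)) = (\<Sum>k\<in>I. ennreal (w k * indicator A (x k)))"
    using assms(3) by (intro sum.cong refl) (simp add: ennreal_mult' indicator_def)
  also have "\<dots> = ennreal (\<Sum>k\<in>I. w k * indicator A (x k))"
    using assms(3) by (intro sum_ennreal) auto
  finally show ?thesis
    unfolding measure_def using wd_emeasure[OF assms(1,2)] assms(3)
    by (simp add: sum_nonneg)
qed

lemma tail_small:
  assumes P: "P \<in> prob_measures_R"
  shows "\<exists>n::nat. measure P {real n<..} < 1/4"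
proof -
  from P have sP: "sets P = sets borel" and ps: "prob_space P" by (auto simp: prob_measures_R_def)
  interpret prob_space P by (rule ps)
  have spP: "space P = UNIV" using sets_eq_imp_space_eq[OF sP] by simp
  have "(\<lambda>n. measure P {..real n}) \<longlonglongrightarrow> measure P (\<Union>n. {..real n})"
    by (rule finite_Lim_measure_incseq) (auto simp: sP incseq_def)
  moreover have "(\<Union>n. {..real n}) = UNIV"
    by (auto intro: real_arch_simple)
  ultimately have "(\<lambda>n. measure P {..real n}) \<longlonglongrightarrow> 1" using prob_space spP by simp
  then have "\<forall>\<^sub>F n in sequentially. measure P {..real n} > 3/4"
    by (rule order_tendstoD) simp
  then obtain n where n: "measure P {..real n} > 3/4" by (meson eventually_sequentially order.refl)
  have "measure P {real n<..} = measure P (space P - {..real n})"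
    using spP by (metis Compl_atMost Diff_UNIV  Compl_eq_Diff_UNIV)
  also have "\<dots> = 1 - measure P {..real n}" by (rule prob_compl) (simp add: sP)
  finally have "measure P {real n<..} < 1/4" using n by linarith
  then show ?thesis by blast
qed

theorem mainTheorem4:
  fixes V :: "nat \<Rightarrow> nat \<Rightarrow> real \<Rightarrow> real" and T :: real
  assumes T_pos: "T > 0"
    and distinct: "\<And>N k j t. N \<ge> 2 \<Longrightarrow> k \<in> {1..N} \<Longrightarrow> j \<in> {1..N} \<Longrightarrow> j \<noteq> k \<Longrightarrow>
                      t \<ge> 0 \<Longrightarrow> V N k t \<noteq> V N j t"
    and ode: "\<And>N k t. N \<ge> 2 \<Longrightarrow> k \<in> {1..N} \<Longrightarrow> t \<ge> 0 \<Longrightarrow>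
               (V N k has_real_derivative
                  (\<Sum>j\<in>{1..N} - {k}. 2 * (lam N k + lam N j) / (V N k t - V N j t)))
                 (at t within {0..})"
    and init: "\<And>N k. N \<ge> 2 \<Longrightarrow> k \<in> {1..N} \<Longrightarrow> V N k 0 = x0 N k"
  shows "\<not> tight_MT T (\<lambda>N t. weighted_dirac {1..N} (lam N) (\<lambda>k. V N k t))"
proof
  assume "tight_MT T (\<lambda>N t. weighted_dirac {1..N} (lam N) (\<lambda>k. V N k t))"
  then obtain r \<alpha> where r: "strict_mono r" and \<alpha>: "\<alpha> \<in> path_space T"
    and conv: "\<And>e. e > 0 \<Longrightarrow> \<forall>\<^sub>F n in sequentially. \<forall>t\<in>{0..T}.
        lp_dist (weighted_dirac {1..r n} (lam (r n)) (\<lambda>k. V (r n) k t)) (\<alpha> t) < e"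
    unfolding tight_MT_def by blast
  define P where "P = \<alpha> T"
  have TT: "T \<in> {0..T}" using T_pos by simp
  have PR: "P \<in> prob_measures_R" using \<alpha> TT unfolding path_space_def P_def by blast
  then have sP: "sets P = sets borel" and ps: "prob_space P" by (auto simp: prob_measures_R_def)
  obtain n0 :: nat where n0: "measure P {real n0<..} < 1/4" using tail_small[OF PR] by blast
  have ev1: "\<forall>\<^sub>F n in sequentially. lp_dist (weighted_dirac {1..r n} (lam (r n)) (\<lambda>k. V (r n) k T)) P < 1/4"
    using conv[of "1/4"] TT unfolding P_def by (simp add: eventually_mono)
  obtain m0 :: nat where m0: "2 * (real n0 + 1)^2 / T < real m0" using reals_Archimedean2 by blast
  have ev2: "\<forall>\<^sub>F n in sequentially. r n \<ge> 2 \<and> r n \<ge> m0"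
    unfolding eventually_sequentially
  proof (intro exI allI impI)
    fix n assume "max 2 m0 \<le> n"
    moreover have "n \<le> r n" using seq_suble[OF r] .
    ultimately show "r n \<ge> 2 \<and> r n \<ge> m0" by simp
  qed
  have "\<forall>\<^sub>F n in sequentially. lp_dist (weighted_dirac {1..r n} (lam (r n)) (\<lambda>k. V (r n) k T)) P < 1/4
     \<and> (r n \<ge> 2 \<and> r n \<ge> m0)"
    by (rule eventually_conj[OF ev1 ev2])
  then obtain N0 where N0: "\<And>n. n \<ge> N0 \<Longrightarrow> lp_dist (weighted_dirac {1..r n} (lam (r n)) (\<lambda>k. V (r n) k T)) P < 1/4
     \<and> (r n \<ge> 2 \<and> r n \<ge> m0)"
    unfolding eventually_sequentially by blast
  define n where "n = N0"
  have n1: "lp_dist (weighted_dirac {1..r n} (lam (r n)) (\<lambda>k. V (r n) k T)) P < 1/4"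
    and n2: "r n \<ge> 2" "r n \<ge> m0"
    using N0[of n] unfolding n_def by auto
  define N where "N = r n"
  define \<beta> where "\<beta> = weighted_dirac {1..N} (lam N) (\<lambda>k. V N k T)"
  define y where "y = V N N T"
  have N2: "N \<ge> 2" using n2 N_def by simp
  have esc: "real N * T \<le> 2 * y^2 \<and> y > 0"
  proof -
    have d1: "\<And>k j t. k \<in> {1..N} \<Longrightarrow> j \<in> {1..N} \<Longrightarrow> j \<noteq> k \<Longrightarrow> t \<ge> 0 \<Longrightarrow> V N k t \<noteq> V N j t"
      by (rule distinct[OF N2])
    have d2: "\<And>k t. k \<in> {1..N} \<Longrightarrow> t \<ge> 0 \<Longrightarrow>
               (V N k has_real_derivative
                  (\<Sum>j\<in>{1..N} - {k}. 2 * (lam N k + lam N j) / (V N k t - V N j t)))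
                 (at t within {0..})"
      by (rule ode[OF N2])
    have d3: "\<And>k. k \<in> {1..N} \<Longrightarrow> V N k 0 = x0 N k" by (rule init[OF N2])
    have "T \<ge> 0" using T_pos by simp
    from heavy_escape[OF N2 d1 d2 d3 this] show ?thesis unfolding y_def .
  qed
  have "2 * (real n0 + 1)^2 < real N * T"
  proof -
    have "real m0 \<le> real N" using n2 unfolding N_def by simp
    then have "2 * (real n0 + 1)^2 / T < real N" using m0 by linarith
    then show ?thesis unfolding pos_divide_less_eq[OF T_pos] .
  qed
  with esc have "(real n0 + 1)^2 < y^2" by linarith
  then have yb: "real n0 + 1 < y"
    by (rule power_less_imp_less_base) (use esc in linarith)
  have lamnn: "\<And>k. k \<in> {1..N} \<Longrightarrow> lam N k \<ge> 0" using N2 by (simp add: lam_def)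
  have mb: "measure \<beta> A = (\<Sum>k\<in>{1..N}. lam N k * indicator A (V N k T))" if "A \<in> sets borel" for A
    unfolding \<beta>_def by (rule wd_measure) (use that lamnn in auto)
  have mbub: "measure \<beta> A \<le> real N" if "A \<in> sets borel" for A
  proof -
    have "(\<Sum>k\<in>{1..N}. lam N k * indicator A (V N k T)) \<le> real (card {1..N}) * 1"
    proof (rule sum_bounded_above)
      fix k assume "k \<in> {1..N}"
      have "lam N k \<le> 1" using N2 by (auto simp: lam_def field_simps)
      then show "lam N k * indicator A (V N k T) \<le> 1"
        using lamnn[OF \<open>k \<in> {1..N}\<close>] by (simp add: indicator_def)
    qed
    then show ?thesis using mb[OF that] by simp
  qed
  define S where "S = {e. e > 0 \<and> (\<forall>A\<in>sets borel.
       measure \<beta> A \<le> measure P (eps_nbhd e A) + e \<and>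
       measure P A \<le> measure \<beta> (eps_nbhd e A) + e)}"
  have "real N + 2 \<in> S"
    unfolding S_def
  proof (intro CollectI conjI ballI)
    fix A :: "real set" assume A: "A \<in> sets borel"
    show "measure \<beta> A \<le> measure P (eps_nbhd (real N + 2) A) + (real N + 2)"
      proof -
      have "measure \<beta> A \<le> real N" by (rule mbub[OF A])
      moreover have "0 \<le> measure P (eps_nbhd (real N + 2) A)" by (rule measure_nonneg)
      ultimately show ?thesis by linarith
    qed
    show "measure P A \<le> measure \<beta> (eps_nbhd (real N + 2) A) + (real N + 2)"
    proof -
      have "measure P A \<le> 1" by (rule prob_space.prob_le_1[OF ps])
      moreover have "0 \<le> measure \<beta> (eps_nbhd (real N + 2) A)" by (rule measure_nonneg)
      ultimately show ?thesis by linarith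
    qed
  qed simp
  then have Sne: "S \<noteq> {}" by blast
  have "Inf S = lp_dist \<beta> P" unfolding lp_dist_def S_def ..
  then have "Inf S < 1/4" using n1 unfolding \<beta>_def N_def by simp
  then obtain e where eS: "e \<in> S" and e4: "e < 1/4" using cInf_lessD[OF Sne] by blast
  have ybor: "{y} \<in> sets borel" by simp
  have e1: "measure \<beta> {y} \<le> measure P (eps_nbhd e {y}) + e" using eS ybor unfolding S_def by blast
  have "measure \<beta> {y} \<ge> lam N N * indicator {y} (V N N T)"
    unfolding mb[OF ybor]
    by (rule member_le_sum[of N _ "\<lambda>k. lam N k * indicator {y} (V N k T)"])
       (use N2 lamnn in \<open>auto simp: indicator_def\<close>)
  then have half: "measure \<beta> {y} \<ge> 1/2" by (simp add: y_def lam_def)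
  have sub: "eps_nbhd e {y} \<subseteq> {real n0<..}"
    using yb e4 by (auto simp: eps_nbhd_def dist_real_def)
  have "measure P (eps_nbhd e {y}) \<le> measure P {real n0<..}"
    by (rule finite_measure.finite_measure_mono[OF prob_space.finite_measure[OF ps] sub]) (simp add: sP)
  then show False using e1 half n0 e4 by linarith
qed

end
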